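(* Let $\mathbb H=\mathbb R$ or $\mathbb C$. Assume $(\mathbf A,\mathbf b)\in\mathbb H^{m\times(d+1)}$ is affine phase retrievable for $\mathbb H^d$ and let $\Omega\subset\mathbb H^d$ be a compact set. Then there exist positive constants $C_1,C_2,c_1,c_2$ depending on $(\mathbf A,\mathbf b)$ and $\Omega$ such that for all $\mathbf x,\mathbf y\in\Omega$, $$\frac{c_1}{1+\|\mathbf x\|+\|\mathbf y\|}\|\mathbf x-\mathbf y\|\le\|\mathbf M_{\mathbf A,\mathbf b}(\mathbf x)-\mathbf M_{\mathbf A,\mathbf b}(\mathbf y)\|\le C_1\|\mathbf x-\mathbf y\|,$$ $$c_2\|\mathbf x-\mathbf y\|\le\|\mathbf M^2_{\mathbf A,\mathbf b}(\mathbf x)-\mathbf M^2_{\mathbf A,\mathbf b}(\mathbf y)\|\le C_2(1+\|\mathbf x\|+\|\mathbf y\|)\|\mathbf x-\mathbf y\|.$$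
   Context: For $\mathbf u,\mathbf v\in\mathbb H^d$, $\langle\mathbf u,\mathbf v\rangle=\sum_i\overline{u_i}v_i$; $\|\cdot\|$ is the Euclidean norm. With $\mathbf A=(\mathbf a_1,\ldots,\mathbf a_m)^\top\in\mathbb H^{m\times d}$ and $\mathbf b=(b_1,\ldots,b_m)^\top\in\mathbb H^m$, $\mathbf M_{\mathbf A,\mathbf b}(\mathbf x)=(|\langle\mathbf a_1,\mathbf x\rangle+b_1|,\ldots,|\langle\mathbf a_m,\mathbf x\rangle+b_m|)$ and $\mathbf M^2_{\mathbf A,\mathbf b}(\mathbf x)=(|\langle\mathbf a_1,\mathbf x\rangle+b_1|^2,\ldots,|\langle\mathbf a_m,\mathbf x\rangle+b_m|^2)$. $(\mathbf A,\mathbf b)$ is affine phase retrievable for $\mathbb H^d$ if $\mathbf M_{\mathbf A,\mathbf b}$ is injective on $\mathbb H^d$. *)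

theory Defs
  imports "HOL-Analysis.Analysis"
begin

text \<open>Vectors in H^d are H^'n (finite index type 'n, d = CARD('n));
  the matrix A in H^{m x d} is H^'n^'m (rows A$i are the a_i), b in H^'m.
  Inner product <u,v> = sum_i conj(u_i) v_i.\<close>

definition hinner_r :: "real^'n \<Rightarrow> real^'n \<Rightarrow> real" where
  "hinner_r u v = (\<Sum>i\<in>UNIV. u$i * v$i)"

definition hinner_c :: "complex^'n \<Rightarrow> complex^'n \<Rightarrow> complex" where
  "hinner_c u v = (\<Sum>i\<in>UNIV. cnj (u$i) * v$i)"

definition M_r :: "real^'n^'m \<Rightarrow> real^'m \<Rightarrow> real^'n \<Rightarrow> real^'m" where
  "M_r A b x = (\<chi> i. \<bar>hinner_r (A$i) x + b$i\<bar>)"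

definition M2_r :: "real^'n^'m \<Rightarrow> real^'m \<Rightarrow> real^'n \<Rightarrow> real^'m" where
  "M2_r A b x = (\<chi> i. \<bar>hinner_r (A$i) x + b$i\<bar>^2)"

definition M_c :: "complex^'n^'m \<Rightarrow> complex^'m \<Rightarrow> complex^'n \<Rightarrow> real^'m" where
  "M_c A b x = (\<chi> i. cmod (hinner_c (A$i) x + b$i))"

definition M2_c :: "complex^'n^'m \<Rightarrow> complex^'m \<Rightarrow> complex^'n \<Rightarrow> real^'m" where
  "M2_c A b x = (\<chi> i. (cmod (hinner_c (A$i) x + b$i))^2)"

definition affine_pr_r :: "real^'n^'m \<Rightarrow> real^'m \<Rightarrow> bool" where
  "affine_pr_r A b \<longleftrightarrow> inj (M_r A b)"

definition affine_pr_c :: "complex^'n^'m \<Rightarrow> complex^'m \<Rightarrow> bool" where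
  "affine_pr_c A b \<longleftrightarrow> inj (M_c A b)"

end

theory Submission
  imports Defs
begin

lemma lower_generic:
  fixes M2 :: "'v::euclidean_space \<Rightarrow> real^'m" and L :: "'v \<Rightarrow> 'v \<Rightarrow> real^'m"
  assumes comp: "compact \<Omega>"
    and diff: "\<And>x y. M2 x - M2 y = L (x+y) (x-y)"
    and sc: "\<And>p c u. L p (c *\<^sub>R u) = c *\<^sub>R L p u"
    and inj: "inj M2"
    and cont: "continuous_on UNIV (\<lambda>z. L (fst z) (snd z))"
  shows "\<exists>c>0. \<forall>x\<in>\<Omega>. \<forall>y\<in>\<Omega>. c * norm (x - y) \<le> norm (M2 x - M2 y)"
proof -
  define K where "K = (\<Omega> \<times> \<Omega> \<times> sphere (0::'v) 1) \<inter> {z. fst (snd z) - fst z = norm (fst (snd z) - fst z) *\<^sub>R snd (snd z)}"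
  have "closed {z::'v\<times>'v\<times>'v. fst (snd z) - fst z = norm (fst (snd z) - fst z) *\<^sub>R snd (snd z)}"
    by (intro closed_Collect_eq continuous_intros)
  hence cK: "compact K" unfolding K_def
    by (intro compact_Int_closed compact_Times comp compact_sphere) (auto simp: K_def)
  define h where "h z = norm (L (fst z + fst (snd z)) (snd (snd z)))" for z :: "'v\<times>'v\<times>'v"
  have ch: "continuous_on K h"
  proof -
    have "continuous_on UNIV (\<lambda>z::'v\<times>'v\<times>'v. L (fst (fst z + fst (snd z), snd (snd z))) (snd (fst z + fst (snd z), snd (snd z))))"
      by (rule continuous_on_compose2[OF cont]) (auto intro!: continuous_intros)
    thus ?thesis unfolding h_def by (auto intro!: continuous_intros intro: continuous_on_subset)
  qed
  have nondeg: "L (x+x) u \<noteq> 0" if "u \<noteq> 0" for x u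
  proof
    assume "L (x+x) u = 0"
    have "M2 (x+u) - M2 (x-u) = L ((x+u)+(x-u)) ((x+u)-(x-u))" by (rule diff)
    also have "(x+u)+(x-u) = x+x" by simp
    also have "(x+u)-(x-u) = 2 *\<^sub>R u" by (simp add: scaleR_2)
    finally have "M2 (x+u) = M2 (x-u)" using sc \<open>L (x+x) u = 0\<close> by simp
    with inj have "x+u = x-u" by (simp add: inj_eq)
    hence "u + u = 0" by (simp add: algebra_simps)
    hence "2 *\<^sub>R u = 0" by (simp add: scaleR_2)
    with that show False by simp
  qed
  have hpos: "h z > 0" if "z \<in> K" for z
  proof -
    obtain x y u where z: "z = (x,y,u)" by (cases z) auto
    have xy: "y - x = norm (y - x) *\<^sub>R u" and u: "norm u = 1" using that by (auto simp: K_def z)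
    show ?thesis
    proof (cases "x = y")
      case True
      have "u \<noteq> 0" using u by auto
      then show ?thesis using nondeg[of u x] True by (auto simp: h_def z)
    next
      case False
      have "M2 y - M2 x = L (y+x) (y-x)" by (rule diff)
      also have "\<dots> = norm (y-x) *\<^sub>R L (x+y) u" using sc xy by (metis add.commute)
      finally have "M2 y - M2 x = norm (y-x) *\<^sub>R L (x+y) u" .
      moreover have "M2 y \<noteq> M2 x" using False inj by (metis inj_eq)
      ultimately show ?thesis by (auto simp: h_def z)
    qed
  qed
  obtain c where c: "c > 0" "\<And>z. z \<in> K \<Longrightarrow> c \<le> h z"
  proof (cases "K = {}")
    case True thus ?thesis using that[of 1] by auto
  next
    case False
    then obtain z0 where "z0 \<in> K" "\<forall>z\<in>K. h z0 \<le> h z" using continuous_attains_inf[OF cK False ch] by blast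
    thus ?thesis using that[of "h z0"] hpos by auto
  qed
  show ?thesis
  proof (intro exI[of _ c] conjI ballI c(1))
    fix x y assume xy: "x \<in> \<Omega>" "y \<in> \<Omega>"
    show "c * norm (x - y) \<le> norm (M2 x - M2 y)"
    proof (cases "x = y")
      case True then show ?thesis by simp
    next
      case False
      define u where "u = (1 / norm (y - x)) *\<^sub>R (y - x)"
      have n: "norm (y - x) > 0" using False by simp
      have "norm u = 1" using n by (simp add: u_def)
      moreover have "y - x = norm (y - x) *\<^sub>R u" using n by (simp add: u_def)
      ultimately have "(x,y,u) \<in> K" using xy by (auto simp: K_def)
      hence "c \<le> norm (L (x+y) u)" using c(2) by (auto simp: h_def)
      have "M2 y - M2 x = norm (y-x) *\<^sub>R L (x+y) u"
        using diff[of y x] sc \<open>y - x = _\<close> by (metis add.commute)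
      hence "norm (M2 x - M2 y) = norm (y-x) * norm (L (x+y) u)"
        by (metis norm_minus_commute norm_scaleR abs_norm_cancel)
      thus ?thesis using \<open>c \<le> _\<close> n by (simp add: norm_minus_commute)
    qed
  qed
qed

lemma main_generic:
  fixes l :: "'m::finite \<Rightarrow> 'v::euclidean_space \<Rightarrow> 'c::real_inner" and b :: "'m \<Rightarrow> 'c"
  assumes lin: "\<And>j. linear (l j)"
    and inj: "inj (\<lambda>x. (\<chi> j. norm (l j x + b j)) :: real^'m)"
    and comp: "compact \<Omega>"
  defines "M \<equiv> (\<lambda>x. (\<chi> j. norm (l j x + b j)) :: real^'m)"
    and "M2 \<equiv> (\<lambda>x. (\<chi> j. norm (l j x + b j)^2) :: real^'m)"
  shows "\<exists>C1 C2 c1 c2::real. C1 > 0 \<and> C2 > 0 \<and> c1 > 0 \<and> c2 > 0 \<and>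
              (\<forall>x\<in>\<Omega>. \<forall>y\<in>\<Omega>.
                 c1 / (1 + norm x + norm y) * norm (x - y) \<le> norm (M x - M y) \<and>
                 norm (M x - M y) \<le> C1 * norm (x - y) \<and>
                 c2 * norm (x - y) \<le> norm (M2 x - M2 y) \<and>
                 norm (M2 x - M2 y) \<le> C2 * (1 + norm x + norm y) * norm (x - y))"
proof -
  have "\<forall>j. \<exists>B>0. \<forall>x. norm (l j x) \<le> B * norm x"
    using linear_bounded_pos[OF lin] by metis
  then obtain B where B: "\<And>j. B j > 0" "\<And>j x. norm (l j x) \<le> B j * norm x" by metis
  define \<alpha> where "\<alpha> = (\<Sum>j\<in>UNIV. B j)"
  define \<beta> where "\<beta> = (\<Sum>j\<in>UNIV. norm (b j))"
  define N where "N = real CARD('m)"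
  have Bal: "B j \<le> \<alpha>" for j unfolding \<alpha>_def
    by (rule member_le_sum) (auto intro: less_imp_le B)
  have bb: "norm (b j) \<le> \<beta>" for j unfolding \<beta>_def
    by (rule member_le_sum) auto
  have apos: "\<alpha> > 0" using Bal[of undefined] B(1)[of undefined] by linarith
  have bpos: "\<beta> \<ge> 0" unfolding \<beta>_def by (auto intro: sum_nonneg)
  have Npos: "N > 0" unfolding N_def by simp
  have lb: "norm (l j h) \<le> \<alpha> * norm h" for j h
    using B(2)[of j h] Bal[of j] by (meson mult_right_mono norm_ge_zero order_trans)
  have ld: "l j x - l j y = l j (x - y)" for j x y using lin by (simp add: linear_diff)
  have c1: "\<bar>M x $ j - M y $ j\<bar> \<le> \<alpha> * norm (x - y)" for x y j
  proof -
    have "\<bar>M x $ j - M y $ j\<bar> \<le> norm ((l j x + b j) - (l j y + b j))"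
      unfolding M_def using norm_triangle_ineq3[of "l j x + b j" "l j y + b j"] by simp
    also have "\<dots> = norm (l j (x - y))" by (simp add: ld[symmetric])
    finally show ?thesis using lb[of j "x-y"] by linarith
  qed
  have sumb: "M x $ j + M y $ j \<le> (\<alpha> + 2*\<beta>) * (1 + norm x + norm y)" for x y j
  proof -
    have "M x $ j \<le> \<alpha> * norm x + \<beta>" unfolding M_def
      using norm_triangle_ineq[of "l j x" "b j"] lb[of j x] bb[of j] by simp
    moreover have "M y $ j \<le> \<alpha> * norm y + \<beta>" unfolding M_def
      using norm_triangle_ineq[of "l j y" "b j"] lb[of j y] bb[of j] by simp
    moreover have "\<alpha> * norm x + \<beta> + (\<alpha> * norm y + \<beta>) \<le> (\<alpha> + 2*\<beta>) * (1 + norm x + norm y)"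
      using apos bpos by (simp add: algebra_simps)
    ultimately show ?thesis by linarith
  qed
  have Mnn: "M x $ j \<ge> 0" for x j unfolding M_def by simp
  have M2M: "M2 x $ j - M2 y $ j = (M x $ j - M y $ j) * (M x $ j + M y $ j)" for x y j
    unfolding M_def M2_def by (simp add: power2_eq_square algebra_simps)
  have c2: "\<bar>M2 x $ j - M2 y $ j\<bar> \<le> \<bar>M x $ j - M y $ j\<bar> * ((\<alpha> + 2*\<beta>) * (1 + norm x + norm y))" for x y j
    unfolding M2M abs_mult using sumb[of x j y] Mnn[of x j] Mnn[of y j]
    by (intro mult_left_mono) auto
  have sum_le: "norm v \<le> N * (\<Sum>j\<in>UNIV. 0) + (\<Sum>j\<in>UNIV. \<bar>v $ j\<bar>)" for v :: "real^'m"
    using norm_le_l1_cart[of v] by simp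
  have l1N: "(\<Sum>j\<in>UNIV. \<bar>v $ j\<bar>) \<le> N * norm v" for v :: "real^'m"
  proof -
    have "(\<Sum>j\<in>UNIV. \<bar>v $ j\<bar>) \<le> (\<Sum>j\<in>(UNIV::'m set). norm v)"
      by (intro sum_mono component_le_norm_cart)
    thus ?thesis by (simp add: N_def)
  qed
  have U1: "norm (M x - M y) \<le> (N * \<alpha>) * norm (x - y)" for x y
  proof -
    have "norm (M x - M y) \<le> (\<Sum>j\<in>UNIV. \<bar>(M x - M y) $ j\<bar>)" by (rule norm_le_l1_cart)
    also have "\<dots> \<le> (\<Sum>j\<in>(UNIV::'m set). \<alpha> * norm (x - y))"
      by (intro sum_mono) (simp add: c1)
    finally show ?thesis by (simp add: N_def)
  qed
  have U2: "norm (M2 x - M2 y) \<le> (N * \<alpha> * (\<alpha> + 2*\<beta>)) * (1 + norm x + norm y) * norm (x - y)" for x y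
  proof -
    have "norm (M2 x - M2 y) \<le> (\<Sum>j\<in>UNIV. \<bar>(M2 x - M2 y) $ j\<bar>)" by (rule norm_le_l1_cart)
    also have "\<dots> \<le> (\<Sum>j\<in>(UNIV::'m set). (\<alpha> * norm (x - y)) * ((\<alpha> + 2*\<beta>) * (1 + norm x + norm y)))"
    proof (intro sum_mono)
      fix j
      have "0 \<le> (\<alpha> + 2*\<beta>) * (1 + norm x + norm y)" using apos bpos by simp
      thus "\<bar>(M2 x - M2 y) $ j\<bar> \<le> (\<alpha> * norm (x - y)) * ((\<alpha> + 2*\<beta>) * (1 + norm x + norm y))"
        using c2[of x j y] c1[of x j y] by (simp add: order_trans mult_right_mono)
    qed
    finally show ?thesis by (simp add: N_def algebra_simps)
  qed
  define L where "L p u = ((\<chi> j. inner (l j u) (l j p + 2 *\<^sub>R b j)) :: real^'m)" for p u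
  have diff: "M2 x - M2 y = L (x+y) (x-y)" for x y
  proof -
    have "norm (l j x + b j)^2 - norm (l j y + b j)^2 = inner (l j (x - y)) (l j (x+y) + 2 *\<^sub>R b j)" for j
      using lin[of j] by (simp add: power2_norm_eq_inner linear_diff linear_add inner_add inner_diff
             inner_commute algebra_simps scaleR_2)
    thus ?thesis by (simp add: vec_eq_iff M2_def L_def)
  qed
  have sc: "L p (c *\<^sub>R u) = c *\<^sub>R L p u" for p c u
    using lin by (simp add: vec_eq_iff L_def linear_scale)
  have injM2: "inj M2"
  proof (rule injI)
    fix x y assume "M2 x = M2 y"
    hence "M x = M y" unfolding M_def M2_def by (simp add: vec_eq_iff)
    thus "x = y" using inj unfolding M_def by (metis injD)
  qed
  have cont: "continuous_on UNIV (\<lambda>z. L (fst z) (snd z))"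
    unfolding L_def using lin
    by (intro continuous_intros linear_continuous_on_compose[where f=snd] linear_continuous_on_compose[where f=fst]) (auto simp: linear_continuous_on)
  obtain c where c: "c > 0" "\<And>x y. x \<in> \<Omega> \<Longrightarrow> y \<in> \<Omega> \<Longrightarrow> c * norm (x - y) \<le> norm (M2 x - M2 y)"
    using lower_generic[OF comp diff sc injM2 cont] by blast
  define c1 where "c1 = c / (N * (\<alpha> + 2*\<beta>))"
  have c1pos: "c1 > 0" unfolding c1_def using c apos bpos Npos by simp
  have L1: "c1 / (1 + norm x + norm y) * norm (x - y) \<le> norm (M x - M y)" if "x \<in> \<Omega>" "y \<in> \<Omega>" for x y
  proof -
    define D where "D = (\<alpha> + 2*\<beta>) * (1 + norm x + norm y)"
    have Dpos: "D > 0" unfolding D_def using apos bpos by (simp add: add_pos_nonneg)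
    have "c * norm (x - y) \<le> norm (M2 x - M2 y)" using c that by auto
    also have "\<dots> \<le> (\<Sum>j\<in>UNIV. \<bar>(M2 x - M2 y) $ j\<bar>)" by (rule norm_le_l1_cart)
    also have "\<dots> \<le> (\<Sum>j\<in>UNIV. \<bar>(M x - M y) $ j\<bar> * D)"
      by (intro sum_mono) (simp add: c2 D_def)
    also have "\<dots> = D * (\<Sum>j\<in>UNIV. \<bar>(M x - M y) $ j\<bar>)" by (simp add: sum_distrib_left mult.commute)
    also have "\<dots> \<le> D * (N * norm (M x - M y))" using Dpos l1N[of "M x - M y"] by (intro mult_left_mono) auto
    finally have *: "c * norm (x - y) \<le> D * N * norm (M x - M y)" by simp
    have "c1 / (1 + norm x + norm y) * norm (x - y) = (c * norm (x - y)) / (D * N)"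
      unfolding c1_def D_def by (simp add: field_simps)
    also have "\<dots> \<le> norm (M x - M y)" using * Dpos Npos by (simp add: divide_le_eq mult.commute)
    finally show ?thesis .
  qed
  show ?thesis
    apply (rule exI[of _ "N * \<alpha>"], rule exI[of _ "N * \<alpha> * (\<alpha> + 2*\<beta>)"], rule exI[of _ c1], rule exI[of _ c])
    using U1 U2 L1 c c1pos apos bpos Npos by (auto simp: add_pos_nonneg)
qed

lemma lin_r: "linear (hinner_r a)"
  by (rule linearI) (simp_all add: hinner_r_def sum.distrib sum_distrib_left algebra_simps)

lemma lin_c: "linear (hinner_c a)"
  by (rule linearI) (simp_all add: hinner_c_def sum.distrib scaleR_sum_right algebra_simps)

lemma Mr_eq: "M_r A b = (\<lambda>x. \<chi> j. norm (hinner_r (A$j) x + b$j))"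
  by (simp add: M_r_def fun_eq_iff)
lemma M2r_eq: "M2_r A b = (\<lambda>x. \<chi> j. norm (hinner_r (A$j) x + b$j)^2)"
  by (simp add: M2_r_def fun_eq_iff)
lemma Mc_eq: "M_c A b = (\<lambda>x. \<chi> j. norm (hinner_c (A$j) x + b$j))"
  by (simp add: M_c_def fun_eq_iff)
lemma M2c_eq: "M2_c A b = (\<lambda>x. \<chi> j. norm (hinner_c (A$j) x + b$j)^2)"
  by (simp add: M2_c_def fun_eq_iff)

theorem theorem4p1:
  shows "(\<forall>(A::real^'n^'m) b (\<Omega>::(real^'n) set).
            affine_pr_r A b \<and> compact \<Omega> \<longrightarrow>
            (\<exists>C1 C2 c1 c2::real. C1 > 0 \<and> C2 > 0 \<and> c1 > 0 \<and> c2 > 0 \<and>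
              (\<forall>x\<in>\<Omega>. \<forall>y\<in>\<Omega>.
                 c1 / (1 + norm x + norm y) * norm (x - y) \<le> norm (M_r A b x - M_r A b y) \<and>
                 norm (M_r A b x - M_r A b y) \<le> C1 * norm (x - y) \<and>
                 c2 * norm (x - y) \<le> norm (M2_r A b x - M2_r A b y) \<and>
                 norm (M2_r A b x - M2_r A b y) \<le> C2 * (1 + norm x + norm y) * norm (x - y))))
       \<and>
         (\<forall>(A::complex^'n^'m) b (\<Omega>::(complex^'n) set).
            affine_pr_c A b \<and> compact \<Omega> \<longrightarrow>
            (\<exists>C1 C2 c1 c2::real. C1 > 0 \<and> C2 > 0 \<and> c1 > 0 \<and> c2 > 0 \<and>
              (\<forall>x\<in>\<Omega>. \<forall>y\<in>\<Omega>.
                 c1 / (1 + norm x + norm y) * norm (x - y) \<le> norm (M_c A b x - M_c A b y) \<and>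
                 norm (M_c A b x - M_c A b y) \<le> C1 * norm (x - y) \<and>
                 c2 * norm (x - y) \<le> norm (M2_c A b x - M2_c A b y) \<and>
                 norm (M2_c A b x - M2_c A b y) \<le> C2 * (1 + norm x + norm y) * norm (x - y))))"
proof (intro conjI allI impI; elim conjE)
  fix A :: "real^'n^'m" and b and \<Omega> :: "(real^'n) set"
  assume "affine_pr_r A b" "compact \<Omega>"
  show "\<exists>C1 C2 c1 c2::real. C1 > 0 \<and> C2 > 0 \<and> c1 > 0 \<and> c2 > 0 \<and>
              (\<forall>x\<in>\<Omega>. \<forall>y\<in>\<Omega>.
                 c1 / (1 + norm x + norm y) * norm (x - y) \<le> norm (M_r A b x - M_r A b y) \<and>
                 norm (M_r A b x - M_r A b y) \<le> C1 * norm (x - y) \<and>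
                 c2 * norm (x - y) \<le> norm (M2_r A b x - M2_r A b y) \<and>
                 norm (M2_r A b x - M2_r A b y) \<le> C2 * (1 + norm x + norm y) * norm (x - y))"
  proof -
    have inj: "inj (\<lambda>x. (\<chi> j. norm (hinner_r (A$j) x + b$j)) :: real^'m)"
      using \<open>affine_pr_r A b\<close> by (simp add: affine_pr_r_def Mr_eq)
    show ?thesis using main_generic[of "\<lambda>j. hinner_r (A$j)" "\<lambda>j. b$j", OF lin_r inj \<open>compact \<Omega>\<close>]
      unfolding Mr_eq M2r_eq by simp
  qed
next
  fix A :: "complex^'n^'m" and b and \<Omega> :: "(complex^'n) set"
  assume "affine_pr_c A b" "compact \<Omega>"
  show "\<exists>C1 C2 c1 c2::real. C1 > 0 \<and> C2 > 0 \<and> c1 > 0 \<and> c2 > 0 \<and>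
              (\<forall>x\<in>\<Omega>. \<forall>y\<in>\<Omega>.
                 c1 / (1 + norm x + norm y) * norm (x - y) \<le> norm (M_c A b x - M_c A b y) \<and>
                 norm (M_c A b x - M_c A b y) \<le> C1 * norm (x - y) \<and>
                 c2 * norm (x - y) \<le> norm (M2_c A b x - M2_c A b y) \<and>
                 norm (M2_c A b x - M2_c A b y) \<le> C2 * (1 + norm x + norm y) * norm (x - y))"
  proof -
    have inj: "inj (\<lambda>x. (\<chi> j. norm (hinner_c (A$j) x + b$j)) :: real^'m)"
      using \<open>affine_pr_c A b\<close> by (simp add: affine_pr_c_def Mc_eq)
    show ?thesis using main_generic[of "\<lambda>j. hinner_c (A$j)" "\<lambda>j. b$j", OF lin_c inj \<open>compact \<Omega>\<close>]
      unfolding Mc_eq M2c_eq by simp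
  qed
qed
end
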